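(* Suppose $\sigma$ is an automorphism of $D$ and let $f(t)=t^4+a_3t^3+a_2t^2+a_1t+a_0\in D[t;\sigma]$. Then $f$ is irreducible if and only if the following three conditions hold: (1) for all $b\in D$: $\sigma^3(b)\sigma^2(b)\sigma(b)b+a_3\sigma^2(b)\sigma(b)b+a_2\sigma(b)b+a_1b+a_0\neq0$; (2) for all $b\in D$: $\sigma^3(b)\sigma^2(b)\sigma(b)b+\sigma^3(b)\sigma^2(b)\sigma(b)a_3+\sigma^3(b)\sigma^2(b)\sigma(a_2)+\sigma^3(b)\sigma^2(a_1)+\sigma^3(a_0)\neq0$; (3) for all $c,d\in D$: $\sigma^2(c)\sigma(c)c+\sigma^2(d)c+\sigma^2(c)\sigma(d)+a_3(\sigma(d)+\sigma(c)c)+a_2c+a_1\neq0$ or $\sigma^2(d)d+\sigma^2(c)\sigma(c)d+a_3\sigma(c)d+a_2d+a_0\neq0$.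
   Context: $D$ is an associative division ring, $\sigma$ a ring automorphism of $D$, and $D[t;\sigma]$ the skew polynomial ring with $ta=\sigma(a)t$. A polynomial $f$ is irreducible if it is not a unit and has no factorization $f=gh$ with $\deg g,\deg h<\deg f$. *)

theory Defs
  imports "HOL-Computational_Algebra.Polynomial"
begin

definition ring_automorphism :: "('a::division_ring \<Rightarrow> 'a) \<Rightarrow> bool" where
  "ring_automorphism \<sigma> \<longleftrightarrow> bij \<sigma> \<and> (\<forall>a b. \<sigma> (a + b) = \<sigma> a + \<sigma> b)
     \<and> (\<forall>a b. \<sigma> (a * b) = \<sigma> a * \<sigma> b) \<and> \<sigma> 1 = 1"

text \<open>Skew polynomial ring D[t;sigma]: elements are represented by their coefficient
  polynomials (f = sum of a_i t^i, coefficients on the left); multiplication is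
  determined by t a = sigma(a) t, i.e. (a t^i)(b t^j) = a sigma^i(b) t^(i+j).\<close>
definition skew_mult :: "('a::division_ring \<Rightarrow> 'a) \<Rightarrow> 'a poly \<Rightarrow> 'a poly \<Rightarrow> 'a poly" where
  "skew_mult \<sigma> f g = (\<Sum>i\<le>degree f. \<Sum>j\<le>degree g.
      monom (coeff f i * (\<sigma> ^^ i) (coeff g j)) (i + j))"

definition skew_unit :: "('a::division_ring \<Rightarrow> 'a) \<Rightarrow> 'a poly \<Rightarrow> bool" where
  "skew_unit \<sigma> f \<longleftrightarrow> (\<exists>g. skew_mult \<sigma> f g = [:1:] \<and> skew_mult \<sigma> g f = [:1:])"

definition skew_irreducible :: "('a::division_ring \<Rightarrow> 'a) \<Rightarrow> 'a poly \<Rightarrow> bool" where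
  "skew_irreducible \<sigma> f \<longleftrightarrow> \<not> skew_unit \<sigma> f \<and>
     \<not> (\<exists>g h. f = skew_mult \<sigma> g h \<and> degree g < degree f \<and> degree h < degree f)"

end

theory Submission
  imports Defs
begin

lemma funpow_zero: fixes \<sigma> :: "'a::division_ring \<Rightarrow> 'a" assumes "\<sigma> 0 = 0" shows "(\<sigma>^^i) 0 = 0"
  using assms by (induction i) auto

lemma coeff_skew_mult:
  fixes \<sigma> :: "'a::division_ring \<Rightarrow> 'a"
  assumes "\<sigma> 0 = 0"
  shows "coeff (skew_mult \<sigma> f g) n = (\<Sum>i\<le>n. coeff f i * (\<sigma>^^i) (coeff g (n - i)))"
proof -
  define F where "F i = coeff f i * (\<sigma>^^i) (coeff g (n - i))" for i
  have "coeff (skew_mult \<sigma> f g) n = (\<Sum>i\<le>degree f. \<Sum>j\<le>degree g.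
      (if n = i + j then coeff f i * (\<sigma> ^^ i) (coeff g j) else 0))"
    by (simp add: skew_mult_def coeff_sum eq_commute)
  also have "\<dots> = (\<Sum>i\<le>degree f. if i \<le> n then F i else 0)"
  proof (rule sum.cong[OF refl])
    fix i assume "i \<in> {..degree f}"
    show "(\<Sum>j\<le>degree g. (if n = i + j then coeff f i * (\<sigma> ^^ i) (coeff g j) else 0))
       = (if i \<le> n then F i else 0)"
    proof (cases "i \<le> n")
      case True
      have "(\<Sum>j\<le>degree g. (if n = i + j then coeff f i * (\<sigma> ^^ i) (coeff g j) else 0))
         = (\<Sum>j\<le>degree g. (if j = n - i then coeff f i * (\<sigma> ^^ i) (coeff g j) else 0))"
        by (rule sum.cong) (use True in auto)
      also have "\<dots> = (if n - i \<le> degree g then F i else 0)"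
        by (simp add: F_def)
      also have "\<dots> = F i"
        using funpow_zero[of \<sigma>, OF assms] by (auto simp: F_def coeff_eq_0)
      finally show ?thesis using True by simp
    qed auto
  qed
  also have "\<dots> = (\<Sum>i\<in>{..degree f} \<inter> {..n}. F i)"
    by (subst sum.inter_restrict) auto
  also have "\<dots> = (\<Sum>i\<le>n. F i)"
    by (rule sum.mono_neutral_left) (auto simp: F_def coeff_eq_0)
  finally show ?thesis by (simp add: F_def)
qed

lemma funpow_inj: fixes \<sigma> :: "'a::division_ring \<Rightarrow> 'a" assumes "inj \<sigma>" "\<sigma> 0 = 0" "x \<noteq> 0" shows "(\<sigma>^^i) x \<noteq> 0"
  using assms by (induction i) (auto dest: injD[of \<sigma> _ 0])

lemma degree_skew_mult:
  fixes \<sigma> :: "'a::division_ring \<Rightarrow> 'a"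
  assumes "inj \<sigma>" "\<sigma> 0 = 0" "f \<noteq> 0" "g \<noteq> 0"
  shows "degree (skew_mult \<sigma> f g) = degree f + degree g"
proof (rule order_antisym)
  show "degree (skew_mult \<sigma> f g) \<le> degree f + degree g"
  proof (rule degree_le, intro allI impI)
    fix n assume n: "degree f + degree g < n"
    have "coeff f i * (\<sigma>^^i) (coeff g (n - i)) = 0" for i
    proof (cases "i \<le> degree f")
      case True then have "coeff g (n - i) = 0" using n by (intro coeff_eq_0) auto
      then show ?thesis using funpow_zero[of \<sigma>, OF assms(2)] by simp
    qed (auto simp: coeff_eq_0)
    then show "coeff (skew_mult \<sigma> f g) n = 0" unfolding coeff_skew_mult[of \<sigma>, OF assms(2)]
      by (intro sum.neutral) auto
  qed
next
  let ?n = "degree f + degree g"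
  have "coeff (skew_mult \<sigma> f g) ?n = (\<Sum>i\<in>{degree f}. coeff f i * (\<sigma>^^i) (coeff g (?n - i)))"
    unfolding coeff_skew_mult[of \<sigma>, OF assms(2)]
  proof (rule sum.mono_neutral_right)
    show "\<forall>i\<in>{..?n} - {degree f}. coeff f i * (\<sigma>^^i) (coeff g (?n - i)) = 0"
    proof
      fix i assume i: "i \<in> {..?n} - {degree f}"
      show "coeff f i * (\<sigma>^^i) (coeff g (?n - i)) = 0"
      proof (cases "i < degree f")
        case True then have "coeff g (?n - i) = 0" by (intro coeff_eq_0) auto
        then show ?thesis using funpow_zero[of \<sigma>, OF assms(2)] by simp
      next
        case False then show ?thesis using i by (auto simp: coeff_eq_0)
      qed
    qed
  qed auto
  also have "\<dots> \<noteq> 0" using assms funpow_inj[of \<sigma>, OF assms(1,2)] by simp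
  finally show "?n \<le> degree (skew_mult \<sigma> f g)" by (rule le_degree)
qed

lemma skew_mult_0: fixes \<sigma> :: "'a::division_ring \<Rightarrow> 'a" assumes "\<sigma> 0 = 0" shows "skew_mult \<sigma> 0 g = 0" "skew_mult \<sigma> f 0 = 0"
  by (auto simp: poly_eq_iff coeff_skew_mult[of \<sigma>, OF assms] funpow_zero[of \<sigma>, OF assms])

lemma aut_hom:
  fixes \<sigma> :: "'a::division_ring \<Rightarrow> 'a"
  assumes "ring_automorphism \<sigma>"
  shows "\<sigma> (x + y) = \<sigma> x + \<sigma> y" "\<sigma> (x * y) = \<sigma> x * \<sigma> y" "\<sigma> 1 = 1" "\<sigma> 0 = 0"
    "\<sigma> (- x) = - \<sigma> x" "\<sigma> (x - y) = \<sigma> x - \<sigma> y" "inj \<sigma>" "surj \<sigma>"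
proof -
  have dd: "bij \<sigma> \<and> (\<forall>a b. \<sigma> (a + b) = \<sigma> a + \<sigma> b)
     \<and> (\<forall>a b. \<sigma> (a * b) = \<sigma> a * \<sigma> b) \<and> \<sigma> 1 = 1"
    using assms unfolding ring_automorphism_def .
  note d = conjunct1[OF dd] conjunct1[OF conjunct2[OF dd]] conjunct1[OF conjunct2[OF conjunct2[OF dd]]]
    conjunct2[OF conjunct2[OF conjunct2[OF dd]]]
  have a: "\<And>x y. \<sigma> (x + y) = \<sigma> x + \<sigma> y" using d(2) by (elim allE)
  then show "\<sigma> (x + y) = \<sigma> x + \<sigma> y" .
  show "\<sigma> (x * y) = \<sigma> x * \<sigma> y" using d(3) by (elim allE)
  show "\<sigma> 1 = 1" by (rule d(4))
  show "inj \<sigma>" "surj \<sigma>" using d(1) by (simp_all add: bij_def)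
  show z: "\<sigma> 0 = 0" using a[of 0 0] by simp
  have m: "\<sigma> (- x) = - \<sigma> x" for x
  proof -
    have "\<sigma> x + \<sigma> (- x) = 0" using a[of x "-x"] z by simp
    then show ?thesis by (simp add: add_eq_0_iff)
  qed
  then show "\<sigma> (- x) = - \<sigma> x" .
  show "\<sigma> (x - y) = \<sigma> x - \<sigma> y" unfolding diff_conv_add_uminus a m ..
qed

lemma pow_simps:
  "(\<sigma>^^1) x = \<sigma> x" "(\<sigma>^^2) x = \<sigma> (\<sigma> x)" "(\<sigma>^^3) x = \<sigma> (\<sigma> (\<sigma> x))"
  "(\<sigma>^^4) x = \<sigma> (\<sigma> (\<sigma> (\<sigma> x)))"
  by (simp_all add: eval_nat_numeral)

lemma coeff_pCons_num:
  "coeff (pCons x p) 1 = coeff p 0" "coeff (pCons x p) 2 = coeff p 1"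
  "coeff (pCons x p) 3 = coeff p 2" "coeff (pCons x p) 4 = coeff p 3"
  by (simp_all add: eval_nat_numeral)

lemma coeffs4:
  fixes \<sigma> :: "'a::division_ring \<Rightarrow> 'a"
  assumes "\<sigma> 0 = 0"
  shows "coeff (skew_mult \<sigma> f g) 0 = coeff f 0 * coeff g 0"
   "coeff (skew_mult \<sigma> f g) 1 = coeff f 0 * coeff g 1 + coeff f 1 * \<sigma> (coeff g 0)"
   "coeff (skew_mult \<sigma> f g) 2 = coeff f 0 * coeff g 2 + coeff f 1 * \<sigma> (coeff g 1)
      + coeff f 2 * \<sigma> (\<sigma> (coeff g 0))"
   "coeff (skew_mult \<sigma> f g) 3 = coeff f 0 * coeff g 3 + coeff f 1 * \<sigma> (coeff g 2)
      + coeff f 2 * \<sigma> (\<sigma> (coeff g 1)) + coeff f 3 * \<sigma> (\<sigma> (\<sigma> (coeff g 0)))"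
   "coeff (skew_mult \<sigma> f g) 4 = coeff f 0 * coeff g 4 + coeff f 1 * \<sigma> (coeff g 3)
      + coeff f 2 * \<sigma> (\<sigma> (coeff g 2)) + coeff f 3 * \<sigma> (\<sigma> (\<sigma> (coeff g 1)))
      + coeff f 4 * \<sigma> (\<sigma> (\<sigma> (\<sigma> (coeff g 0))))"
proof -
  have s1: "{..1::nat} = {0,1}" and s2: "{..2::nat} = {0,1,2}" and s3: "{..3::nat} = {0,1,2,3}"
    and s4: "{..4::nat} = {0,1,2,3,4}" by auto
  show "coeff (skew_mult \<sigma> f g) 0 = coeff f 0 * coeff g 0"
    "coeff (skew_mult \<sigma> f g) 1 = coeff f 0 * coeff g 1 + coeff f 1 * \<sigma> (coeff g 0)"
   "coeff (skew_mult \<sigma> f g) 2 = coeff f 0 * coeff g 2 + coeff f 1 * \<sigma> (coeff g 1)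
      + coeff f 2 * \<sigma> (\<sigma> (coeff g 0))"
   "coeff (skew_mult \<sigma> f g) 3 = coeff f 0 * coeff g 3 + coeff f 1 * \<sigma> (coeff g 2)
      + coeff f 2 * \<sigma> (\<sigma> (coeff g 1)) + coeff f 3 * \<sigma> (\<sigma> (\<sigma> (coeff g 0)))"
   "coeff (skew_mult \<sigma> f g) 4 = coeff f 0 * coeff g 4 + coeff f 1 * \<sigma> (coeff g 3)
      + coeff f 2 * \<sigma> (\<sigma> (coeff g 2)) + coeff f 3 * \<sigma> (\<sigma> (\<sigma> (coeff g 1)))
      + coeff f 4 * \<sigma> (\<sigma> (\<sigma> (\<sigma> (coeff g 0))))"
    unfolding coeff_skew_mult[of \<sigma>, OF assms] s1 s2 s3 s4
    by (simp_all add: pow_simps add.assoc)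
qed

lemma poly_eq4:
  assumes "degree p \<le> 4" "degree q \<le> 4" "coeff p 0 = coeff q 0" "coeff p 1 = coeff q 1"
    "coeff p 2 = coeff q 2" "coeff p 3 = coeff q 3" "coeff p 4 = coeff q 4"
  shows "p = q"
proof (rule poly_eqI)
  fix n show "coeff p n = coeff q n"
  proof (cases "n \<le> 4")
    case True then have "n = 0 \<or> n = 1 \<or> n = 2 \<or> n = 3 \<or> n = 4" by linarith
    then show ?thesis using assms(3-7) by (elim disjE) simp_all
  next
    case False then show ?thesis using assms(1,2) by (simp add: coeff_eq_0)
  qed
qed



lemma nec1:
  fixes \<sigma> :: "'a::division_ring \<Rightarrow> 'a"
  assumes A: "ring_automorphism \<sigma>"
   and E: "(\<sigma>^^3) b * (\<sigma>^^2) b * \<sigma> b * b + a3 * (\<sigma>^^2) b * \<sigma> b * b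
          + a2 * \<sigma> b * b + a1 * b + a0 = 0"
  shows "\<not> skew_irreducible \<sigma> [:a0,a1,a2,a3,1:]"
proof -
  note h = aut_hom[OF A]
  define g2 where "g2 = a3 + \<sigma>(\<sigma>(\<sigma> b))"
  define g1 where "g1 = a2 + g2 * \<sigma>(\<sigma> b)"
  define g0 where "g0 = a1 + g1 * \<sigma> b"
  have a0: "a0 = - (\<sigma>(\<sigma>(\<sigma> b)) * \<sigma>(\<sigma> b) * \<sigma> b * b + a3 * \<sigma>(\<sigma> b) * \<sigma> b * b
          + a2 * \<sigma> b * b + a1 * b)"
    using minus_unique[OF E[unfolded pow_simps]] by simp
  have deg: "degree (skew_mult \<sigma> [:g0,g1,g2,1:] [:-b,1:]) = 4"
    by (subst degree_skew_mult) (use h in auto)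
  have eq: "[:a0,a1,a2,a3,1:] = skew_mult \<sigma> [:g0,g1,g2,1:] [:-b,1:]"
    by (rule poly_eq4, unfold coeffs4[of \<sigma>, OF h(4)] coeff_pCons_num)
       (use deg in \<open>simp_all add: h g0_def g1_def g2_def a0 algebra_simps\<close>)
  show ?thesis unfolding skew_irreducible_def
  proof (intro notI, elim conjE)
    assume "\<not> (\<exists>g h. [:a0, a1, a2, a3, 1:] = skew_mult \<sigma> g h \<and> degree g < degree [:a0, a1, a2, a3, 1:]
           \<and> degree h < degree [:a0, a1, a2, a3, 1:])"
    moreover have "degree [:g0,g1,g2,1:] < degree [:a0, a1, a2, a3, 1:]" "degree [:-b,1:] < degree [:a0, a1, a2, a3, 1:]"
      by simp_all
    ultimately show False using eq by blast
  qed
qed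


lemma nec2:
  fixes \<sigma> :: "'a::division_ring \<Rightarrow> 'a"
  assumes A: "ring_automorphism \<sigma>"
   and E: "(\<sigma>^^3) b * (\<sigma>^^2) b * \<sigma> b * b + (\<sigma>^^3) b * (\<sigma>^^2) b * \<sigma> b * a3
          + (\<sigma>^^3) b * (\<sigma>^^2) b * \<sigma> a2 + (\<sigma>^^3) b * (\<sigma>^^2) a1 + (\<sigma>^^3) a0 = 0"
  shows "\<not> skew_irreducible \<sigma> [:a0,a1,a2,a3,1:]"
proof -
  note h = aut_hom[OF A]
  obtain k2 where k2: "\<sigma> k2 = a3 + b" using surjD[OF h(8)] by metis
  obtain k1 where k1: "\<sigma> k1 = a2 + b * k2" using surjD[OF h(8)] by metis
  obtain k0 where k0: "\<sigma> k0 = a1 + b * k1" using surjD[OF h(8)] by metis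
  have "\<sigma>(\<sigma>(\<sigma>(a0 + b * k0))) = (\<sigma>^^3) b * (\<sigma>^^2) b * \<sigma> b * b + (\<sigma>^^3) b * (\<sigma>^^2) b * \<sigma> b * a3
          + (\<sigma>^^3) b * (\<sigma>^^2) b * \<sigma> a2 + (\<sigma>^^3) b * (\<sigma>^^2) a1 + (\<sigma>^^3) a0"
    by (simp add: h k0 k1 k2 pow_simps algebra_simps)
  also have "\<dots> = \<sigma>(\<sigma>(\<sigma> 0))" using E by (simp add: h)
  finally have "a0 + b * k0 = 0" using h(7) by (auto dest: injD)
  then have a0: "a0 = - (b * k0)" by (simp add: eq_neg_iff_add_eq_0)
  have deg: "degree (skew_mult \<sigma> [:-b,1:] [:k0,k1,k2,1:]) = 4"
    by (subst degree_skew_mult) (use h in auto)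
  have eq: "[:a0,a1,a2,a3,1:] = skew_mult \<sigma> [:-b,1:] [:k0,k1,k2,1:]"
    by (rule poly_eq4, unfold coeffs4[of \<sigma>, OF h(4)] coeff_pCons_num)
       (use deg in \<open>simp_all add: h k0 k1 k2 a0 algebra_simps\<close>)
  show ?thesis unfolding skew_irreducible_def
  proof (intro notI, elim conjE)
    assume "\<not> (\<exists>g h. [:a0, a1, a2, a3, 1:] = skew_mult \<sigma> g h \<and> degree g < degree [:a0, a1, a2, a3, 1:]
           \<and> degree h < degree [:a0, a1, a2, a3, 1:])"
    moreover have "degree [:k0,k1,k2,1:] < degree [:a0, a1, a2, a3, 1:]" "degree [:-b,1:] < degree [:a0, a1, a2, a3, 1:]"
      by simp_all
    ultimately show False using eq by blast
  qed
qed

lemma nec3: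
  fixes \<sigma> :: "'a::division_ring \<Rightarrow> 'a"
  assumes A: "ring_automorphism \<sigma>"
   and E1: "(\<sigma>^^2) c * \<sigma> c * c + (\<sigma>^^2) d * c + (\<sigma>^^2) c * \<sigma> d
              + a3 * (\<sigma> d + \<sigma> c * c) + a2 * c + a1 = 0"
   and E2: "(\<sigma>^^2) d * d + (\<sigma>^^2) c * \<sigma> c * d + a3 * \<sigma> c * d + a2 * d + a0 = 0"
  shows "\<not> skew_irreducible \<sigma> [:a0,a1,a2,a3,1:]"
proof -
  note h = aut_hom[OF A]
  define g1 where "g1 = a3 + \<sigma>(\<sigma> c)"
  define g0 where "g0 = a2 + g1 * \<sigma> c + \<sigma>(\<sigma> d)"
  have a0: "a0 = - ((\<sigma>^^2) d * d + (\<sigma>^^2) c * \<sigma> c * d + a3 * \<sigma> c * d + a2 * d)"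
    using minus_unique[OF E2] by simp
  have a1: "a1 = - ((\<sigma>^^2) c * \<sigma> c * c + (\<sigma>^^2) d * c + (\<sigma>^^2) c * \<sigma> d
              + a3 * (\<sigma> d + \<sigma> c * c) + a2 * c)"
    using minus_unique[OF E1] by simp
  have deg: "degree (skew_mult \<sigma> [:g0,g1,1:] [:-d,-c,1:]) = 4"
    by (subst degree_skew_mult) (use h in auto)
  have eq: "[:a0,a1,a2,a3,1:] = skew_mult \<sigma> [:g0,g1,1:] [:-d,-c,1:]"
    by (rule poly_eq4, unfold coeffs4[of \<sigma>, OF h(4)] coeff_pCons_num)
       (use deg in \<open>simp_all add: h g0_def g1_def a0 a1 pow_simps algebra_simps\<close>)
  show ?thesis unfolding skew_irreducible_def
  proof (intro notI, elim conjE)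
    assume "\<not> (\<exists>g h. [:a0, a1, a2, a3, 1:] = skew_mult \<sigma> g h \<and> degree g < degree [:a0, a1, a2, a3, 1:]
           \<and> degree h < degree [:a0, a1, a2, a3, 1:])"
    moreover have "degree [:g0,g1,1:] < degree [:a0, a1, a2, a3, 1:]" "degree [:-d,-c,1:] < degree [:a0, a1, a2, a3, 1:]"
      by simp_all
    ultimately show False using eq by blast
  qed
qed



lemma coeff_eqs:
  fixes \<sigma> :: "'a::division_ring \<Rightarrow> 'a"
  assumes "\<sigma> 0 = 0" and eq: "[:a0,a1,a2,a3,1:] = skew_mult \<sigma> g h"
  shows "a0 = coeff g 0 * coeff h 0"
   "a1 = coeff g 0 * coeff h 1 + coeff g 1 * \<sigma> (coeff h 0)"
   "a2 = coeff g 0 * coeff h 2 + coeff g 1 * \<sigma> (coeff h 1)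
      + coeff g 2 * \<sigma> (\<sigma> (coeff h 0))"
   "a3 = coeff g 0 * coeff h 3 + coeff g 1 * \<sigma> (coeff h 2)
      + coeff g 2 * \<sigma> (\<sigma> (coeff h 1)) + coeff g 3 * \<sigma> (\<sigma> (\<sigma> (coeff h 0)))"
   "1 = coeff g 0 * coeff h 4 + coeff g 1 * \<sigma> (coeff h 3)
      + coeff g 2 * \<sigma> (\<sigma> (coeff h 2)) + coeff g 3 * \<sigma> (\<sigma> (\<sigma> (coeff h 1)))
      + coeff g 4 * \<sigma> (\<sigma> (\<sigma> (\<sigma> (coeff h 0))))"
  using arg_cong[OF eq, of "\<lambda>p. coeff p 0"] arg_cong[OF eq, of "\<lambda>p. coeff p 1"]
    arg_cong[OF eq, of "\<lambda>p. coeff p 2"] arg_cong[OF eq, of "\<lambda>p. coeff p 3"]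
    arg_cong[OF eq, of "\<lambda>p. coeff p 4"]
  unfolding coeffs4[of \<sigma>, OF assms(1)] coeff_pCons_num by simp_all

lemma suff1:
  fixes \<sigma> :: "'a::division_ring \<Rightarrow> 'a"
  assumes A: "ring_automorphism \<sigma>" and eq: "[:a0,a1,a2,a3,1:] = skew_mult \<sigma> g h"
    and dh: "degree h = 1" and dg: "degree g = 3"
  shows "\<exists>b. (\<sigma>^^3) b * (\<sigma>^^2) b * \<sigma> b * b + a3 * (\<sigma>^^2) b * \<sigma> b * b
          + a2 * \<sigma> b * b + a1 * b + a0 = 0"
proof -
  note hm = aut_hom[OF A]
  note e = coeff_eqs[of \<sigma>, OF hm(4) eq]
  have z: "coeff h 2 = 0" "coeff h 3 = 0" "coeff h 4 = 0" "coeff g 4 = 0"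
    using dh dg by (simp_all add: coeff_eq_0)
  have h1: "coeff h 1 \<noteq> 0" using dh by (metis leading_coeff_0_iff one_neq_zero degree_0)
  define b where "b = - (inverse (coeff h 1) * coeff h 0)"
  have hb: "coeff h 0 = - (coeff h 1 * b)" using h1 by (simp add: b_def mult.assoc[symmetric])
  have one: "coeff g 3 * \<sigma> (\<sigma> (\<sigma> (coeff h 1))) = 1" using e(5) z hm(4) by simp
  have canc: "coeff g 3 * (\<sigma> (\<sigma> (\<sigma> (coeff h 1))) * x) = x" for x
    unfolding mult.assoc[symmetric] one by (rule mult_1_left)
  show ?thesis
    by (rule exI[of _ b]) (simp add: e(1-4) z hm hb pow_simps algebra_simps canc canc[unfolded One_nat_def])
qed


lemma suff3:
  fixes \<sigma> :: "'a::division_ring \<Rightarrow> 'a"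
  assumes A: "ring_automorphism \<sigma>" and eq: "[:a0,a1,a2,a3,1:] = skew_mult \<sigma> g h"
    and dh: "degree h = 3" and dg: "degree g = 1"
  shows "\<exists>b. (\<sigma>^^3) b * (\<sigma>^^2) b * \<sigma> b * b + (\<sigma>^^3) b * (\<sigma>^^2) b * \<sigma> b * a3
          + (\<sigma>^^3) b * (\<sigma>^^2) b * \<sigma> a2 + (\<sigma>^^3) b * (\<sigma>^^2) a1 + (\<sigma>^^3) a0 = 0"
proof -
  note hm = aut_hom[OF A]
  note e = coeff_eqs[of \<sigma>, OF hm(4) eq]
  have z: "coeff g 2 = 0" "coeff g 3 = 0" "coeff g 4 = 0" "coeff h 4 = 0"
    using dh dg by (simp_all add: coeff_eq_0)
  have g1: "coeff g 1 \<noteq> 0" using dg by (metis leading_coeff_0_iff one_neq_zero degree_0)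
  obtain c where gc: "coeff g 1 = \<sigma> c" using surjD[OF hm(8)] by metis
  have c0: "c \<noteq> 0" using g1 gc hm(4) by auto
  define b where "b = - (coeff g 0 * inverse c)"
  have gb: "coeff g 0 = - (b * c)" using c0 by (simp add: b_def mult.assoc)
  have "\<sigma> (c * coeff h 3) = \<sigma> 1" using e(5) z hm gc by simp
  then have one: "c * coeff h 3 = 1" using hm(7) by (auto dest: injD)
  have one1: "\<sigma> c * \<sigma> (coeff h 3) = 1" using one hm by (metis)
  have one2: "\<sigma> (\<sigma> c) * \<sigma> (\<sigma> (coeff h 3)) = 1" using one1 hm by (metis)
  have one3: "\<sigma> (\<sigma> (\<sigma> c)) * \<sigma> (\<sigma> (\<sigma> (coeff h 3))) = 1" using one2 hm by (metis)
  have canc: "c * (coeff h 3 * x) = x" "\<sigma> c * (\<sigma> (coeff h 3) * x) = x"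
     "\<sigma> (\<sigma> c) * (\<sigma> (\<sigma> (coeff h 3)) * x) = x"
     "\<sigma> (\<sigma> (\<sigma> c)) * (\<sigma> (\<sigma> (\<sigma> (coeff h 3))) * x) = x" for x
    unfolding mult.assoc[symmetric] one one1 one2 one3 by (rule mult_1_left)+
  show ?thesis
    by (rule exI[of _ b]) (simp add: e(1-4) z hm gb gc gc[unfolded One_nat_def] pow_simps
       algebra_simps canc one one1 one2 one3)
qed

lemma suff2:
  fixes \<sigma> :: "'a::division_ring \<Rightarrow> 'a"
  assumes A: "ring_automorphism \<sigma>" and eq: "[:a0,a1,a2,a3,1:] = skew_mult \<sigma> g h"
    and dh: "degree h = 2" and dg: "degree g = 2"
  shows "\<exists>c d. (\<sigma>^^2) c * \<sigma> c * c + (\<sigma>^^2) d * c + (\<sigma>^^2) c * \<sigma> d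
              + a3 * (\<sigma> d + \<sigma> c * c) + a2 * c + a1 = 0
          \<and> (\<sigma>^^2) d * d + (\<sigma>^^2) c * \<sigma> c * d + a3 * \<sigma> c * d + a2 * d + a0 = 0"
proof -
  note hm = aut_hom[OF A]
  note e = coeff_eqs[of \<sigma>, OF hm(4) eq]
  have z: "coeff g 3 = 0" "coeff g 4 = 0" "coeff h 3 = 0" "coeff h 4 = 0"
    using dh dg by (simp_all add: coeff_eq_0)
  have h2: "coeff h 2 \<noteq> 0" using dh by (metis leading_coeff_0_iff zero_neq_numeral degree_0)
  define c where "c = - (inverse (coeff h 2) * coeff h 1)"
  define d where "d = - (inverse (coeff h 2) * coeff h 0)"
  have hc: "coeff h 1 = - (coeff h 2 * c)" using h2 by (simp add: c_def mult.assoc[symmetric])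
  have hd: "coeff h 0 = - (coeff h 2 * d)" using h2 by (simp add: d_def mult.assoc[symmetric])
  have one: "coeff g 2 * \<sigma> (\<sigma> (coeff h 2)) = 1" using e(5) z hm(4) by simp
  have canc: "coeff g 2 * (\<sigma> (\<sigma> (coeff h 2)) * x) = x" for x
    unfolding mult.assoc[symmetric] one by (rule mult_1_left)
  show ?thesis
    by (rule exI[of _ c], rule exI[of _ d]) (simp add: e(1-4) z hm hc hd hc[unfolded One_nat_def] pow_simps
       algebra_simps canc)
qed


theorem mainTheorem15:
  fixes \<sigma> :: "'a::division_ring \<Rightarrow> 'a" and a0 a1 a2 a3 :: 'a
  assumes "ring_automorphism \<sigma>"
  shows "skew_irreducible \<sigma> [:a0, a1, a2, a3, 1:] \<longleftrightarrow>
    (\<forall>b. (\<sigma>^^3) b * (\<sigma>^^2) b * \<sigma> b * b + a3 * (\<sigma>^^2) b * \<sigma> b * b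
          + a2 * \<sigma> b * b + a1 * b + a0 \<noteq> 0) \<and>
    (\<forall>b. (\<sigma>^^3) b * (\<sigma>^^2) b * \<sigma> b * b + (\<sigma>^^3) b * (\<sigma>^^2) b * \<sigma> b * a3
          + (\<sigma>^^3) b * (\<sigma>^^2) b * \<sigma> a2 + (\<sigma>^^3) b * (\<sigma>^^2) a1 + (\<sigma>^^3) a0 \<noteq> 0) \<and>
    (\<forall>c d. (\<sigma>^^2) c * \<sigma> c * c + (\<sigma>^^2) d * c + (\<sigma>^^2) c * \<sigma> d
              + a3 * (\<sigma> d + \<sigma> c * c) + a2 * c + a1 \<noteq> 0
          \<or> (\<sigma>^^2) d * d + (\<sigma>^^2) c * \<sigma> c * d + a3 * \<sigma> c * d + a2 * d + a0 \<noteq> 0)"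
  proof -
  note hm = aut_hom[OF assms]
  show ?thesis
  proof
    assume irr: "skew_irreducible \<sigma> [:a0,a1,a2,a3,1:]"
    show "(\<forall>b. (\<sigma>^^3) b * (\<sigma>^^2) b * \<sigma> b * b + a3 * (\<sigma>^^2) b * \<sigma> b * b
          + a2 * \<sigma> b * b + a1 * b + a0 \<noteq> 0) \<and>
    (\<forall>b. (\<sigma>^^3) b * (\<sigma>^^2) b * \<sigma> b * b + (\<sigma>^^3) b * (\<sigma>^^2) b * \<sigma> b * a3
          + (\<sigma>^^3) b * (\<sigma>^^2) b * \<sigma> a2 + (\<sigma>^^3) b * (\<sigma>^^2) a1 + (\<sigma>^^3) a0 \<noteq> 0) \<and>
    (\<forall>c d. (\<sigma>^^2) c * \<sigma> c * c + (\<sigma>^^2) d * c + (\<sigma>^^2) c * \<sigma> d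
              + a3 * (\<sigma> d + \<sigma> c * c) + a2 * c + a1 \<noteq> 0
          \<or> (\<sigma>^^2) d * d + (\<sigma>^^2) c * \<sigma> c * d + a3 * \<sigma> c * d + a2 * d + a0 \<noteq> 0)"
      using nec1[OF assms] nec2[OF assms] nec3[OF assms] irr by blast
  next
    assume C: "(\<forall>b. (\<sigma>^^3) b * (\<sigma>^^2) b * \<sigma> b * b + a3 * (\<sigma>^^2) b * \<sigma> b * b
          + a2 * \<sigma> b * b + a1 * b + a0 \<noteq> 0) \<and>
    (\<forall>b. (\<sigma>^^3) b * (\<sigma>^^2) b * \<sigma> b * b + (\<sigma>^^3) b * (\<sigma>^^2) b * \<sigma> b * a3
          + (\<sigma>^^3) b * (\<sigma>^^2) b * \<sigma> a2 + (\<sigma>^^3) b * (\<sigma>^^2) a1 + (\<sigma>^^3) a0 \<noteq> 0) \<and>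
    (\<forall>c d. (\<sigma>^^2) c * \<sigma> c * c + (\<sigma>^^2) d * c + (\<sigma>^^2) c * \<sigma> d
              + a3 * (\<sigma> d + \<sigma> c * c) + a2 * c + a1 \<noteq> 0
          \<or> (\<sigma>^^2) d * d + (\<sigma>^^2) c * \<sigma> c * d + a3 * \<sigma> c * d + a2 * d + a0 \<noteq> 0)"
    have f0: "[:a0,a1,a2,a3,1:] \<noteq> 0" by simp
    have df: "degree [:a0,a1,a2,a3,1:] = 4" by simp
    show "skew_irreducible \<sigma> [:a0,a1,a2,a3,1:]" unfolding skew_irreducible_def
    proof (intro conjI notI)
      assume "skew_unit \<sigma> [:a0,a1,a2,a3,1:]"
      then obtain g where g: "skew_mult \<sigma> [:a0,a1,a2,a3,1:] g = [:1:]" by (auto simp: skew_unit_def)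
      have "g \<noteq> 0" using g skew_mult_0[of \<sigma>, OF hm(4)] by auto
      then have "degree (skew_mult \<sigma> [:a0,a1,a2,a3,1:] g) = 4 + degree g"
        using degree_skew_mult[of \<sigma>, OF hm(7) hm(4) f0] df by simp
      with g show False by simp
    next
      assume "\<exists>g h. [:a0,a1,a2,a3,1:] = skew_mult \<sigma> g h \<and> degree g < degree [:a0,a1,a2,a3,1:]
          \<and> degree h < degree [:a0,a1,a2,a3,1:]"
      then obtain g h where eq: "[:a0,a1,a2,a3,1:] = skew_mult \<sigma> g h" and dg: "degree g < 4"
        and dh: "degree h < 4" using df by auto
      have g0: "g \<noteq> 0" and h0: "h \<noteq> 0" using eq f0 skew_mult_0[of \<sigma>, OF hm(4)] by auto
      have "degree g + degree h = 4"
        using degree_skew_mult[of \<sigma>, OF hm(7) hm(4) g0 h0] eq df by simp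
      then have "degree h = 1 \<and> degree g = 3 \<or> degree h = 2 \<and> degree g = 2 \<or> degree h = 3 \<and> degree g = 1"
        using dg dh by arith
      then show False
      proof (elim disjE conjE)
        assume "degree h = 1" "degree g = 3"
        from suff1[OF assms eq this] C show False by blast
      next
        assume "degree h = 2" "degree g = 2"
        from suff2[OF assms eq this] C show False by blast
      next
        assume "degree h = 3" "degree g = 1"
        from suff3[OF assms eq this] C show False by blast
      qed
    qed
  qed
qed

end
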